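(* Let $\mathbf{G}\subset\mathbb{R}^n$ be a bounded open set with real algebraic boundary, $\mathbf{G}=\mathrm{int}\,\overline{\mathbf{G}}$, $\partial\mathbf{G}$ of degree $d$, and $0$ not in the real zero set of $I(\partial\mathbf{G})$; let $y_\alpha=\int_{\mathbf{G}}\mathbf{x}^\alpha d\mathbf{x}$. Let $k\le 2d$. If the linear system $\mathbf{M}^d_k(\mathbf{y})\begin{bmatrix}-1\\ \mathbf{g}\end{bmatrix}=0$ in the unknown $\mathbf{g}\in\mathbb{R}^{s(d)-1}$ has a unique solution, then this solution also solves $\mathbf{M}^d_{2d}(\mathbf{y})\begin{bmatrix}-1\\ \mathbf{g}\end{bmatrix}=0$ (and hence the polynomial with coefficient vector $(0,\mathbf{g})$ equals $1$ on $\partial\mathbf{G}$).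
   Context: $\mathbb{N}^n_k:=\{\alpha\in\mathbb{N}^n:|\alpha|\le k\}$, $s(d)=\binom{n+d}{n}$. The matrix $\mathbf{M}^d_k(\mathbf{y})$ has rows indexed by $\alpha\in\mathbb{N}^n_k$, columns by $\beta\in\mathbb{N}^n_d$ (first column $\beta=0$), entries $\frac{n+|\alpha|+|\beta|}{n+|\alpha|}y_{\alpha+\beta}$. The vanishing ideal $I(\partial\mathbf{G})$ is principal; the degree of $\partial\mathbf{G}$ is the degree of its generator. *)

theory Defs
  imports "HOL-Analysis.Analysis"
begin

text \<open>Multi-indices on the coordinate type 'n (dimension n = CARD('n)).\<close>

definition mi_abs :: "('n::finite \<Rightarrow> nat) \<Rightarrow> nat" where
  "mi_abs \<alpha> = (\<Sum>i\<in>UNIV. \<alpha> i)"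

definition mi_set :: "nat \<Rightarrow> ('n::finite \<Rightarrow> nat) set" where
  "mi_set k = {\<alpha>. mi_abs \<alpha> \<le> k}"

definition mono :: "('n::finite \<Rightarrow> nat) \<Rightarrow> real^'n \<Rightarrow> real" where
  "mono \<alpha> x = (\<Prod>i\<in>UNIV. (x $ i) ^ \<alpha> i)"

definition poly_le :: "nat \<Rightarrow> (real^'n::finite \<Rightarrow> real) \<Rightarrow> bool" where
  "poly_le d f \<longleftrightarrow> (\<exists>c. \<forall>x. f x = (\<Sum>\<alpha>\<in>mi_set d. c \<alpha> * mono \<alpha> x))"

definition is_poly :: "(real^'n::finite \<Rightarrow> real) \<Rightarrow> bool" where
  "is_poly f \<longleftrightarrow> (\<exists>d. poly_le d f)"

definition poly_deg_eq :: "nat \<Rightarrow> (real^'n::finite \<Rightarrow> real) \<Rightarrow> bool" where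
  "poly_deg_eq d f \<longleftrightarrow> poly_le d f \<and> (d = 0 \<or> \<not> poly_le (d - 1) f)"

text \<open>Vanishing ideal of a set S (polynomials as polynomial functions).\<close>

definition vanishing_ideal :: "(real^'n::finite) set \<Rightarrow> (real^'n \<Rightarrow> real) set" where
  "vanishing_ideal S = {f. is_poly f \<and> (\<forall>x\<in>S. f x = 0)}"

definition real_zero_set :: "(real^'n::finite \<Rightarrow> real) set \<Rightarrow> (real^'n) set" where
  "real_zero_set I = {x. \<forall>f\<in>I. f x = 0}"

definition generates :: "(real^'n::finite \<Rightarrow> real) \<Rightarrow> (real^'n \<Rightarrow> real) set \<Rightarrow> bool" where
  "generates h I \<longleftrightarrow> is_poly h \<and> I = {f. \<exists>q. is_poly q \<and> f = (\<lambda>x. q x * h x)}"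

definition real_algebraic_set :: "(real^'n::finite) set \<Rightarrow> bool" where
  "real_algebraic_set S \<longleftrightarrow> (\<exists>P. finite P \<and> (\<forall>p\<in>P. is_poly p) \<and> S = real_zero_set P)"

definition moments :: "(real^'n::finite) set \<Rightarrow> ('n \<Rightarrow> nat) \<Rightarrow> real" where
  "moments G \<alpha> = integral G (mono \<alpha>)"

definition mom_entry :: "(('n::finite \<Rightarrow> nat) \<Rightarrow> real) \<Rightarrow> ('n \<Rightarrow> nat) \<Rightarrow> ('n \<Rightarrow> nat) \<Rightarrow> real" where
  "mom_entry y \<alpha> \<beta> =
     (real CARD('n) + real (mi_abs \<alpha>) + real (mi_abs \<beta>)) / (real CARD('n) + real (mi_abs \<alpha>))
     * y (\<lambda>i. \<alpha> i + \<beta> i)"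

definition ext_vec :: "(('n::finite \<Rightarrow> nat) \<Rightarrow> real) \<Rightarrow> ('n \<Rightarrow> nat) \<Rightarrow> real" where
  "ext_vec g \<beta> = (if \<beta> = (\<lambda>_. 0) then -1 else g \<beta>)"

text \<open>Solution set of M^d_k(y) [-1; g] = 0, with g in R^{s(d)-1}, i.e. indexed by N^n_d minus {0}
  (represented as functions vanishing outside that index set).\<close>

definition mom_solutions :: "nat \<Rightarrow> nat \<Rightarrow> (('n::finite \<Rightarrow> nat) \<Rightarrow> real) \<Rightarrow> (('n \<Rightarrow> nat) \<Rightarrow> real) set" where
  "mom_solutions d k y =
     {g. (\<forall>\<beta>. \<beta> \<notin> mi_set d - {\<lambda>_. 0} \<longrightarrow> g \<beta> = 0) \<and>
         (\<forall>\<alpha>\<in>mi_set k. (\<Sum>\<beta>\<in>mi_set d. mom_entry y \<alpha> \<beta> * ext_vec g \<beta>) = 0)}"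

end

theory Submission
  imports Defs "HOL-Computational_Algebra.Polynomial"
begin


lemma line_int:
  fixes \<phi> \<phi>' :: "real \<Rightarrow> real" and U :: "real set"
  assumes oU: "open U" and bU: "bounded U"
    and der: "\<And>y. (\<phi> has_real_derivative \<phi>' y) (at y)"
    and fr0: "\<And>y. y \<in> frontier U \<Longrightarrow> \<phi> y = 0"
    and fin: "finite (frontier U)"
  shows "((\<lambda>y. indicator U y * \<phi>' y) has_integral 0) UNIV"
proof -
  obtain B where B: "\<And>x. x \<in> U \<Longrightarrow> \<bar>x\<bar> \<le> B" using bU unfolding bounded_iff by auto
  define a where "a = -(\<bar>B\<bar>+1)"
  define b where "b = \<bar>B\<bar>+1"
  have Uab: "U \<subseteq> {a..b}" using B by (force simp: a_def b_def)
  have aU: "a \<notin> U" and bU': "b \<notin> U" using B by (force simp: a_def b_def)+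
  define \<rho> where "\<rho> = (\<lambda>y. if y \<in> U then \<phi> y else 0)"
  have cphi: "continuous_on UNIV \<phi>"
    using der by (meson DERIV_isCont continuous_at_imp_continuous_on)
  have fr: "frontier U = closure U - U" using oU by (simp add: frontier_def interior_open)
  have "continuous_on (closure U \<union> (- U)) \<rho>"
    unfolding \<rho>_def
    apply (rule continuous_on_cases)
    using oU cphi fr0 fr by (auto intro: continuous_on_subset)
  moreover have "closure U \<union> (- U) = UNIV" using closure_subset by auto
  ultimately have crho: "continuous_on {a..b} \<rho>" by (metis continuous_on_subset top_greatest)
  have dd: "(\<rho> has_vector_derivative (indicator U x * \<phi>' x)) (at x)" if x: "x \<in> {a..b} - frontier U" for x
  proof (cases "x \<in> U")
    case True
    have "(\<rho> has_real_derivative \<phi>' x) (at x)"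
      by (rule has_field_derivative_transform_within_open[OF der oU True]) (simp add: \<rho>_def)
    then show ?thesis using True by (simp add: has_real_derivative_iff_has_vector_derivative)
  next
    case False
    then have xc: "x \<in> - closure U" using x fr by auto
    have "(\<rho> has_real_derivative 0) (at x)"
      apply (rule has_field_derivative_transform_within_open[of "\<lambda>_. 0" 0 x "- closure U"])
      using xc closure_subset by (auto simp: \<rho>_def)
    then show ?thesis using False by (simp add: has_real_derivative_iff_has_vector_derivative)
  qed
  have "((\<lambda>y. indicator U y * \<phi>' y) has_integral (\<rho> b - \<rho> a)) {a..b}"
    by (rule fundamental_theorem_of_calculus_strong[OF fin _ dd crho]) (auto simp: a_def b_def)
  then have "((\<lambda>y. indicator U y * \<phi>' y) has_integral 0) {a..b}"
    using aU bU' by (simp add: \<rho>_def)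
  then show ?thesis
    by (rule has_integral_on_superset) (use Uab in \<open>auto simp: indicator_def\<close>)
qed

lemma integrable_ind_cont:
  fixes f :: "'a::euclidean_space \<Rightarrow> real"
  assumes cf: "continuous_on UNIV f" and bS: "bounded S" and oS: "open S"
  shows "integrable lborel (\<lambda>x. indicator S x * f x)"
proof -
  have cc: "compact (closure S)" using bS by (simp add: compact_closure)
  then have "compact (f ` closure S)" by (meson cf compact_continuous_image continuous_on_subset top_greatest)
  then obtain B where B: "\<And>x. x \<in> closure S \<Longrightarrow> norm (f x) \<le> B"
    by (metis bounded_iff compact_imp_bounded image_eqI)
  have fm: "f \<in> borel_measurable borel" using cf by (rule borel_measurable_continuous_onI)
  have Sm: "S \<in> sets borel" using oS by simp
  show ?thesis
  proof (rule integrableI_bounded_set[where A="closure S" and B="max B 0"])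
    show "closure S \<in> sets lborel" by simp
    show "(\<lambda>x. indicator S x * f x) \<in> borel_measurable lborel" using fm Sm by measurable
    show "emeasure lborel (closure S) < \<infinity>" using cc by (rule emeasure_compact_finite)
    show "AE x in lborel. x \<in> closure S \<longrightarrow> norm (indicator S x * f x) \<le> max B 0"
      using B closure_subset by (auto simp: indicator_def le_max_iff_disj)
    show "AE x in lborel. x \<notin> closure S \<longrightarrow> indicator S x * f x = 0"
      using closure_subset by (auto simp: indicator_def)
  qed
qed

lemma core:
  fixes G :: "(real^'n) set" and P D :: "real^'n \<Rightarrow> real" and i :: 'n
  assumes bG: "bounded G" and oG: "open G" and cD: "continuous_on UNIV D"
    and P0: "\<And>x. x \<in> frontier G \<Longrightarrow> P x = 0"
    and dP: "\<And>x t. ((\<lambda>s. P (x + s *\<^sub>R axis i 1)) has_real_derivative D (x + t *\<^sub>R axis i 1)) (at t)"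
    and deg: "\<And>x. (\<forall>t. P (x + t *\<^sub>R axis i 1) = 0) \<or> finite {t. x + t *\<^sub>R axis i 1 \<in> frontier G}"
  shows "integral G D = 0"
proof -
  define e :: "real^'n" where "e = axis i 1"
  have eB: "e \<in> Basis" unfolding e_def by simp
  have ne: "norm e = 1" unfolding e_def by simp
  define \<Phi> where "\<Phi> = (\<lambda>x. indicator G x * D x)"
  have intP: "integrable lborel \<Phi>" unfolding \<Phi>_def by (rule integrable_ind_cont[OF cD bG oG])
  have Pm: "\<Phi> \<in> borel_measurable borel" using intP by auto
  obtain R where R: "\<And>x. x \<in> G \<Longrightarrow> norm x \<le> R" using bG unfolding bounded_iff by auto
  have line: "(\<integral>y. \<Phi> (p + y *\<^sub>R e) \<partial>lborel) = 0" for p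
  proof -
    define U where "U = (\<lambda>y. p + y *\<^sub>R e) -` G"
    have cl: "continuous_on UNIV (\<lambda>y::real. p + y *\<^sub>R e)" by (intro continuous_intros)
    have oU: "open U" unfolding U_def by (rule continuous_open_vimage[OF oG]) (intro continuous_intros)
    have bU: "bounded U" unfolding bounded_iff
    proof (intro exI ballI)
      fix y assume "y \<in> U"
      then have "norm (p + y *\<^sub>R e) \<le> R" using R by (auto simp: U_def)
      moreover have "norm (y *\<^sub>R e) \<le> norm (p + y *\<^sub>R e) + norm p"
        by (metis add_diff_cancel_left' norm_triangle_ineq4 add.commute)
      ultimately show "norm y \<le> R + norm p" using ne by simp
    qed
    have cD': "continuous_on UNIV (\<lambda>y. D (p + y *\<^sub>R e))"
      by (rule continuous_on_compose2[OF cD cl]) auto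
    have psi: "(\<lambda>y. \<Phi> (p + y *\<^sub>R e)) = (\<lambda>y. indicator U y * D (p + y *\<^sub>R e))"
      by (auto simp: \<Phi>_def U_def indicator_def)
    have int1: "integrable lborel (\<lambda>y. \<Phi> (p + y *\<^sub>R e))"
      unfolding psi by (rule integrable_ind_cont[OF cD' bU oU])
    have "((\<lambda>y. indicator U y * D (p + y *\<^sub>R e)) has_integral 0) UNIV"
    proof (cases "\<forall>t. P (p + t *\<^sub>R e) = 0")
      case True
      have "D (p + y *\<^sub>R e) = 0" for y
      proof -
        have "((\<lambda>s. P (p + s *\<^sub>R e)) has_real_derivative D (p + y *\<^sub>R e)) (at y)" using dP e_def by simp
        moreover have "((\<lambda>s. P (p + s *\<^sub>R e)) has_real_derivative 0) (at y)" using True by simp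
        ultimately show ?thesis by (rule DERIV_unique)
      qed
      then show ?thesis by simp
    next
      case False
      then have fin: "finite {t. p + t *\<^sub>R e \<in> frontier G}" using deg e_def by auto
      have frU: "frontier U \<subseteq> {t. p + t *\<^sub>R e \<in> frontier G}"
      proof
        fix y assume y: "y \<in> frontier U"
        have "closure U \<subseteq> (\<lambda>y. p + y *\<^sub>R e) -` closure G"
          unfolding U_def
          by (rule closure_minimal) (auto intro: closure_subset[THEN subsetD] continuous_closed_vimage[OF closed_closure] continuous_intros)
        moreover have "y \<in> closure U" "y \<notin> U" using y oU by (auto simp: frontier_def interior_open)
        ultimately show "y \<in> {t. p + t *\<^sub>R e \<in> frontier G}"
          using oG by (auto simp: U_def frontier_def interior_open)
      qed
      show ?thesis
      proof (rule line_int[OF oU bU])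
        show "((\<lambda>s. P (p + s *\<^sub>R e)) has_real_derivative D (p + y *\<^sub>R e)) (at y)" for y
          using dP e_def by simp
        show "P (p + y *\<^sub>R e) = 0" if "y \<in> frontier U" for y using that frU P0 by auto
        show "finite (frontier U)" using frU fin by (rule finite_subset)
      qed
    qed
    then have "integral UNIV (\<lambda>y. \<Phi> (p + y *\<^sub>R e)) = 0" unfolding psi by blast
    then show ?thesis using integral_lborel[OF int1] by simp
  qed
  have map_m: "(\<lambda>f. \<Sum>b\<in>Basis. f b *\<^sub>R b) \<in> measurable (\<Pi>\<^sub>M b\<in>Basis. (lborel::real measure)) (borel :: (real^'n) measure)"
    by measurable
  have L: "(lborel :: (real^'n) measure) = distr (\<Pi>\<^sub>M b\<in>Basis. lborel) borel (\<lambda>f. \<Sum>b\<in>Basis. f b *\<^sub>R b)"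
    by (rule lborel_eq)
  have intPi: "integrable (\<Pi>\<^sub>M b\<in>Basis. lborel) (\<lambda>f. \<Phi> (\<Sum>b\<in>Basis. f b *\<^sub>R b))"
    using intP unfolding L by (subst (asm) integrable_distr_eq[OF map_m Pm])
  have "integral\<^sup>L lborel \<Phi> = (\<integral>f. \<Phi> (\<Sum>b\<in>Basis. f b *\<^sub>R b) \<partial>(\<Pi>\<^sub>M b\<in>Basis. lborel))"
    unfolding L by (rule integral_distr[OF map_m Pm])
  also have "\<dots> = 0"
  proof -
    interpret product_sigma_finite "\<lambda>_::real^'n. (lborel::real measure)" by standard
    have BB: "Basis = insert e (Basis - {e})" using eB by auto
    have "(\<integral>f. \<Phi> (\<Sum>b\<in>Basis. f b *\<^sub>R b) \<partial>(\<Pi>\<^sub>M b\<in>Basis. lborel))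
        = (\<integral>f. \<Phi> (\<Sum>b\<in>Basis. f b *\<^sub>R b) \<partial>(\<Pi>\<^sub>M b\<in>insert e (Basis - {e}). lborel))"
      using BB by simp
    also have "\<dots> = (\<integral>x. (\<integral>y. \<Phi> (\<Sum>b\<in>Basis. (x(e:=y)) b *\<^sub>R b) \<partial>lborel) \<partial>(\<Pi>\<^sub>M b\<in>Basis - {e}. lborel))"
      by (rule product_integral_insert) (use intPi BB in auto)
    also have "\<dots> = 0"
    proof -
      have inner: "(\<integral>y. \<Phi> (\<Sum>b\<in>Basis. (x(e:=y)) b *\<^sub>R b) \<partial>lborel) = 0" for x
      proof -
        have "(\<Sum>b\<in>Basis. (x(e:=y)) b *\<^sub>R b) = (\<Sum>b\<in>Basis-{e}. x b *\<^sub>R b) + y *\<^sub>R e" for y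
          by (subst sum.remove[OF finite_Basis eB]) (auto intro!: sum.cong)
        then show ?thesis using line by simp
      qed
      show ?thesis unfolding inner by simp
    qed
    finally show ?thesis .
  qed
  finally have "integral\<^sup>L lborel \<Phi> = 0" .
  moreover have "integral G D = integral UNIV \<Phi>"
  proof -
    have "\<Phi> = (\<lambda>x. if x \<in> G then D x else 0)" by (auto simp: \<Phi>_def indicator_def fun_eq_iff)
    then show ?thesis by (simp add: integral_restrict_UNIV)
  qed
  ultimately show ?thesis using integral_lborel[OF intP] by simp
qed



lemma finite_mi_set: "finite (mi_set d :: ('n::finite \<Rightarrow> nat) set)"
proof -
  have "mi_set d \<subseteq> PiE UNIV (\<lambda>_::'n. {..d})"
  proof
    fix \<alpha> :: "'n \<Rightarrow> nat" assume a: "\<alpha> \<in> mi_set d"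
    have "\<alpha> j \<le> d" for j
    proof -
      have "\<alpha> j \<le> (\<Sum>i\<in>UNIV. \<alpha> i)" by (rule member_le_sum) auto
      then show ?thesis using a by (simp add: mi_set_def mi_abs_def)
    qed
    then show "\<alpha> \<in> PiE UNIV (\<lambda>_. {..d})" by (auto simp: PiE_UNIV_domain)
  qed
  moreover have "finite (PiE UNIV (\<lambda>_::'n. {..d}))" by (rule finite_PiE) auto
  ultimately show ?thesis by (rule finite_subset)
qed

lemma zero_in_mi_set: "(\<lambda>_. 0) \<in> mi_set d"
  by (simp add: mi_set_def mi_abs_def)

lemma mono_zero: "mono \<alpha> (0::real^'n::finite) = (if \<alpha> = (\<lambda>_. 0) then 1 else 0)"
proof (cases "\<alpha> = (\<lambda>_. 0)")
  case True then show ?thesis by (simp add: mono_def)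
next
  case False
  then obtain j where "\<alpha> j \<noteq> 0" by auto
  then have "(\<Prod>i\<in>UNIV. (0::real) ^ \<alpha> i) = 0" by (intro prod_zero) auto
  then show ?thesis using False by (simp add: mono_def)
qed

lemma mono_add: "mono (\<lambda>j. \<alpha> j + \<beta> j) x = mono \<alpha> x * mono \<beta> x"
  by (simp add: mono_def power_add prod.distrib)

lemma mi_abs_add: "mi_abs (\<lambda>j. \<alpha> j + \<beta> j) = mi_abs \<alpha> + mi_abs \<beta>"
  by (simp add: mi_abs_def sum.distrib)

lemma cont_mono: "continuous_on UNIV (mono \<alpha> :: real^'n::finite \<Rightarrow> real)"
  unfolding mono_def by (intro continuous_intros)

lemma line_poly:
  fixes f :: "real^'n::finite \<Rightarrow> real"
  assumes "poly_le d f"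
  shows "\<exists>q. \<forall>t. f (p + t *\<^sub>R e) = poly q t"
proof -
  obtain c where c: "\<And>x. f x = (\<Sum>\<alpha>\<in>mi_set d. c \<alpha> * mono \<alpha> x)" using assms by (auto simp: poly_le_def)
  define q where "q = (\<Sum>\<alpha>\<in>mi_set d. smult (c \<alpha>) (\<Prod>j\<in>UNIV. [:p $ j, e $ j:] ^ \<alpha> j))"
  have "f (p + t *\<^sub>R e) = poly q t" for t
    unfolding c q_def mono_def by (simp add: poly_sum poly_prod poly_power algebra_simps)
  then show ?thesis by blast
qed

lemma is_poly_one: "is_poly (\<lambda>_::real^'n::finite. 1)"
proof -
  have "mi_set 0 = {(\<lambda>_::'n. 0::nat)}" by (auto simp: mi_set_def mi_abs_def)
  then have "poly_le 0 (\<lambda>_::real^'n. 1)" unfolding poly_le_def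
    by (intro exI[of _ "\<lambda>_. 1"]) (simp add: mono_def)
  then show ?thesis by (auto simp: is_poly_def)
qed

lemma deriv_mono:
  fixes x :: "real^'n::finite"
  shows "((\<lambda>s. (x + s *\<^sub>R axis i 1) $ i * mono \<gamma> (x + s *\<^sub>R axis i 1)) has_real_derivative
          (real (\<gamma> i) + 1) * mono \<gamma> (x + t *\<^sub>R axis i 1)) (at t)"
proof -
  define C where "C = (\<Prod>j\<in>UNIV-{i}. (x $ j) ^ \<gamma> j)"
  have m: "mono \<gamma> (x + s *\<^sub>R axis i 1) = (x $ i + s) ^ \<gamma> i * C" for s
  proof -
    have "mono \<gamma> (x + s *\<^sub>R axis i 1) = (x $ i + s) ^ \<gamma> i * (\<Prod>j\<in>UNIV-{i}. ((x + s *\<^sub>R axis i 1) $ j) ^ \<gamma> j)"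
      unfolding mono_def by (subst prod.remove[of UNIV i]) auto
    also have "(\<Prod>j\<in>UNIV-{i}. ((x + s *\<^sub>R axis i 1) $ j) ^ \<gamma> j) = C"
      unfolding C_def by (intro prod.cong) (auto simp: axis_def)
    finally show ?thesis .
  qed
  have d: "((\<lambda>s. x $ i + s) has_real_derivative 1) (at t)" by (auto intro!: derivative_eq_intros)
  have "((\<lambda>s. (x $ i + s) ^ Suc (\<gamma> i) * C) has_real_derivative (1 + of_nat (\<gamma> i)) * (1 * (x $ i + t) ^ \<gamma> i) * C) (at t)"
    by (rule DERIV_cmult_right[OF DERIV_power_Suc[OF d]])
  then show ?thesis by (simp add: m algebra_simps)
qed



lemma integrable_on_G:
  fixes f :: "real^'n::finite \<Rightarrow> real"
  assumes "continuous_on UNIV f" "bounded G" "open G"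
  shows "f integrable_on G"
proof -
  have "(\<lambda>x. indicator G x * f x) integrable_on UNIV"
    by (rule integrable_on_lborel[OF integrable_ind_cont[OF assms]])
  moreover have "(\<lambda>x. indicator G x * f x) = (\<lambda>x. if x \<in> G then f x else 0)"
    by (auto simp: indicator_def fun_eq_iff)
  ultimately show ?thesis by (simp add: integrable_restrict_UNIV)
qed

lemma key_identity:
  fixes G :: "(real^'n::finite) set" and h :: "real^'n \<Rightarrow> real" and c :: "('n \<Rightarrow> nat) \<Rightarrow> real"
  assumes bG: "bounded G" and oG: "open G"
    and hc: "\<And>x. h x = (\<Sum>\<beta>\<in>mi_set d. c \<beta> * mono \<beta> x)"
    and hv: "\<And>x. x \<in> frontier G \<Longrightarrow> h x = 0"
  shows "(\<Sum>\<beta>\<in>mi_set d. (real CARD('n) + real (mi_abs \<alpha>) + real (mi_abs \<beta>)) * c \<beta> * moments G (\<lambda>j. \<alpha> j + \<beta> j)) = 0"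
proof -
  define D where "D = (\<lambda>i x. \<Sum>\<beta>\<in>mi_set d. c \<beta> * ((real (\<alpha> i + \<beta> i) + 1) * mono (\<lambda>j. \<alpha> j + \<beta> j) x))"
  have cD: "continuous_on UNIV (D i)" for i
    unfolding D_def by (intro continuous_intros continuous_on_compose2[OF cont_mono]) auto
  have hpoly: "poly_le d h" unfolding poly_le_def using hc by blast
  have D0: "integral G (D i) = 0" for i
  proof (rule core[OF bG oG cD, where P="\<lambda>x. x $ i * mono \<alpha> x * h x"])
    show "x $ i * mono \<alpha> x * h x = 0" if "x \<in> frontier G" for x using hv that by simp
    show "((\<lambda>s. (x + s *\<^sub>R axis i 1) $ i * mono \<alpha> (x + s *\<^sub>R axis i 1) * h (x + s *\<^sub>R axis i 1))
        has_real_derivative D i (x + t *\<^sub>R axis i 1)) (at t)" for x t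
    proof -
      have eq: "(\<lambda>s. (x + s *\<^sub>R axis i 1) $ i * mono \<alpha> (x + s *\<^sub>R axis i 1) * h (x + s *\<^sub>R axis i 1))
        = (\<lambda>s. \<Sum>\<beta>\<in>mi_set d. c \<beta> * ((x + s *\<^sub>R axis i 1) $ i * mono (\<lambda>j. \<alpha> j + \<beta> j) (x + s *\<^sub>R axis i 1)))"
        by (simp add: hc sum_distrib_left mono_add algebra_simps sum.distrib)
      have dm: "((\<lambda>s. (x + s *\<^sub>R axis i 1) $ i * mono (\<lambda>j. \<alpha> j + \<beta> j) (x + s *\<^sub>R axis i 1)) has_real_derivative
          (real (\<alpha> i + \<beta> i) + 1) * mono (\<lambda>j. \<alpha> j + \<beta> j) (x + t *\<^sub>R axis i 1)) (at t)" for \<beta>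
        using deriv_mono[of x i "\<lambda>j. \<alpha> j + \<beta> j" t] by simp
      show ?thesis unfolding eq D_def
        by (intro DERIV_sum DERIV_cmult dm)
    qed
    show "(\<forall>t. (x + t *\<^sub>R axis i 1) $ i * mono \<alpha> (x + t *\<^sub>R axis i 1) * h (x + t *\<^sub>R axis i 1) = 0)
       \<or> finite {t. x + t *\<^sub>R axis i 1 \<in> frontier G}" for x
    proof -
      obtain q where q: "\<And>t. h (x + t *\<^sub>R axis i 1) = poly q t"
        using line_poly[OF hpoly] by blast
      show ?thesis
      proof (cases "q = 0")
        case True then show ?thesis using q by simp
      next
        case False
        have "{t. x + t *\<^sub>R axis i 1 \<in> frontier G} \<subseteq> {t. poly q t = 0}"
          using hv q by (metis (mono_tags, lifting) mem_Collect_eq subsetI)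
        then show ?thesis using poly_roots_finite[OF False] finite_subset by blast
      qed
    qed
  qed
  have intm: "mono \<gamma> integrable_on G" for \<gamma>
    by (rule integrable_on_G[OF cont_mono bG oG])
  have "(\<Sum>\<beta>\<in>mi_set d. (real CARD('n) + real (mi_abs \<alpha>) + real (mi_abs \<beta>)) * c \<beta> * moments G (\<lambda>j. \<alpha> j + \<beta> j))
      = integral G (\<lambda>x. \<Sum>\<beta>\<in>mi_set d. (real CARD('n) + real (mi_abs \<alpha>) + real (mi_abs \<beta>)) * c \<beta> * mono (\<lambda>j. \<alpha> j + \<beta> j) x)"
    unfolding moments_def
    by (subst integral_sum) (auto simp: finite_mi_set intro!: integrable_on_mult_right intm)
  also have "(\<lambda>x. \<Sum>\<beta>\<in>mi_set d. (real CARD('n) + real (mi_abs \<alpha>) + real (mi_abs \<beta>)) * c \<beta> * mono (\<lambda>j. \<alpha> j + \<beta> j) x)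
      = (\<lambda>x. \<Sum>i\<in>UNIV. D i x)"
  proof
    fix x
    have "(\<Sum>i\<in>UNIV. D i x) = (\<Sum>\<beta>\<in>mi_set d. c \<beta> * mono (\<lambda>j. \<alpha> j + \<beta> j) x * (\<Sum>i\<in>UNIV. (real (\<alpha> i + \<beta> i) + 1)))"
      unfolding D_def by (subst sum.swap) (simp add: sum_distrib_left algebra_simps)
    also have "\<dots> = (\<Sum>\<beta>\<in>mi_set d. (real CARD('n) + real (mi_abs \<alpha>) + real (mi_abs \<beta>)) * c \<beta> * mono (\<lambda>j. \<alpha> j + \<beta> j) x)"
      by (intro sum.cong refl) (simp add: mi_abs_def sum.distrib algebra_simps)
    finally show "(\<Sum>\<beta>\<in>mi_set d. (real CARD('n) + real (mi_abs \<alpha>) + real (mi_abs \<beta>)) * c \<beta> * mono (\<lambda>j. \<alpha> j + \<beta> j) x) = (\<Sum>i\<in>UNIV. D i x)" by simp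
  qed
  also have "integral G (\<lambda>x. \<Sum>i\<in>UNIV. D i x) = (\<Sum>i\<in>UNIV. integral G (D i))"
    by (rule integral_sum) (auto intro: integrable_on_G[OF cD bG oG])
  also have "\<dots> = 0" using D0 by simp
  finally show ?thesis .
qed



theorem corollary1:
  fixes G :: "(real^'n) set" and d k :: nat and h :: "real^'n \<Rightarrow> real"
    and g :: "('n \<Rightarrow> nat) \<Rightarrow> real"
  assumes "bounded G" and "open G"
    and "real_algebraic_set (frontier G)"
    and "G = interior (closure G)"
    and "generates h (vanishing_ideal (frontier G))"
    and "poly_deg_eq d h"
    and "0 \<notin> real_zero_set (vanishing_ideal (frontier G))"
    and "k \<le> 2 * d"
    and "g \<in> mom_solutions d k (moments G)"
    and "\<forall>g'. g' \<in> mom_solutions d k (moments G) \<longrightarrow> g' = g"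
  shows "g \<in> mom_solutions d (2 * d) (moments G)"
proof -
  obtain c where hc: "\<And>x. h x = (\<Sum>\<beta>\<in>mi_set d. c \<beta> * mono \<beta> x)"
    using assms(6) by (auto simp: poly_deg_eq_def poly_le_def)
  have VI: "vanishing_ideal (frontier G) = {f. \<exists>q. is_poly q \<and> f = (\<lambda>x. q x * h x)}"
    using assms(5) by (simp add: generates_def)
  have "h \<in> vanishing_ideal (frontier G)"
    unfolding VI using is_poly_one by fastforce
  then have hv: "\<And>x. x \<in> frontier G \<Longrightarrow> h x = 0" by (simp add: vanishing_ideal_def)
  from assms(7) obtain f where "f \<in> vanishing_ideal (frontier G)" "f 0 \<noteq> 0"
    by (auto simp: real_zero_set_def)
  then have h0: "h 0 \<noteq> 0" unfolding VI by auto
  define z :: "'n \<Rightarrow> nat" where "z = (\<lambda>_. 0)"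
  have "h 0 = (\<Sum>\<beta>\<in>mi_set d. c \<beta> * (if \<beta> = z then 1 else 0))"
    by (simp add: hc mono_zero z_def)
  also have "\<dots> = c z" using zero_in_mi_set[of d] by (auto simp: z_def if_distrib sum.delta[OF finite_mi_set] cong: if_cong)
  finally have c0: "c z \<noteq> 0" using h0 by simp
  define gs where "gs = (\<lambda>\<beta>. if \<beta> \<in> mi_set d \<and> \<beta> \<noteq> z then - c \<beta> / c z else 0)"
  have ev: "ext_vec gs \<beta> = - c \<beta> / c z" if "\<beta> \<in> mi_set d" for \<beta>
    using that c0 by (auto simp: ext_vec_def gs_def z_def)
  have gsm: "gs \<in> mom_solutions d m (moments G)" for m
    unfolding mom_solutions_def
  proof (intro CollectI conjI allI impI ballI)
    show "gs \<beta> = 0" if "\<beta> \<notin> mi_set d - {\<lambda>_. 0}" for \<beta> using that by (auto simp: gs_def z_def)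
    fix \<alpha> :: "'n \<Rightarrow> nat"
    define N where "N = real CARD('n) + real (mi_abs \<alpha>)"
    have Npos: "N > 0" unfolding N_def using zero_less_card_finite[where 'a='n] by (simp add: add_pos_nonneg)
    have "(\<Sum>\<beta>\<in>mi_set d. mom_entry (moments G) \<alpha> \<beta> * ext_vec gs \<beta>)
        = (\<Sum>\<beta>\<in>mi_set d. (- 1 / (N * c z)) * ((real CARD('n) + real (mi_abs \<alpha>) + real (mi_abs \<beta>)) * c \<beta> * moments G (\<lambda>j. \<alpha> j + \<beta> j)))"
      using Npos c0 by (intro sum.cong refl) (simp add: ev mom_entry_def N_def field_simps)
    also have "\<dots> = (- 1 / (N * c z)) * (\<Sum>\<beta>\<in>mi_set d. (real CARD('n) + real (mi_abs \<alpha>) + real (mi_abs \<beta>)) * c \<beta> * moments G (\<lambda>j. \<alpha> j + \<beta> j))"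
      by (simp add: sum_distrib_left)
    also have "\<dots> = 0" using key_identity[OF assms(1,2) hc hv] by simp
    finally show "(\<Sum>\<beta>\<in>mi_set d. mom_entry (moments G) \<alpha> \<beta> * ext_vec gs \<beta>) = 0" .
  qed
  have "g = gs" using assms(10) gsm by metis
  then show ?thesis using gsm by simp
qed


end
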